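(* Let $H_\alpha(k)=-\Delta_\alpha(k)+V$, $k\in\mathbb T^d$, be the fiber magnetic Schrödinger operator on the fundamental graph $\mathcal G_*=(\mathcal V_*,\mathcal A_* )$ and put $v_x=V_x-\varkappa_x$, $\phi(\mathbf c,k)=\alpha(\mathbf c)+\langle\tau(\mathbf c),k\rangle$. Then $$\operatorname{Tr}H_\alpha(k)=\sum_{x\in\mathcal V_*}v_x+\sum_{\mathbf c\in\mathcal C_1}\cos\phi(\mathbf c,k),$$ $$\operatorname{Tr}H_\alpha^2(k)=\sum_{x\in\mathcal V_*}v_x^2+2\sum_{\mathbf c\in\mathcal C_1}v_{x_{\mathbf c}}\cos\phi(\mathbf c,k)+\sum_{\mathbf c\in\mathcal C_2}\cos\phi(\mathbf c,k),$$ $$\frac1{(2\pi)^d}\int_{\mathbb T^d}\operatorname{Tr}H_\alpha(k)dk=\sum_{x\in\mathcal V_*}v_x+\sum_{\mathbf c\in\mathcal C_1^0}\cos\alpha(\mathbf c),$$ $$\frac1{(2\pi)^d}\int_{\mathbb T^d}\operatorname{Tr}H_\alpha^2(k)dk=\sum_{x\in\mathcal V_*}v_x^2+2\sum_{\mathbf c\in\mathcal C_1^0}v_{x_{\mathbf c}}\cos\alpha(\mathbf c)+\sum_{\mathbf c\in\mathcal C_2^0}\cos\alpha(\mathbf c),$$ where $x_{\mathbf c}$ is the unique vertex of the cycle $\mathbf c\in\mathcal C_1$. If there are no loops in $\mathcal G_*$, then $\operatorname{Tr}H_\alpha(k)=\frac1{(2\pi)^d}\int_{\mathbb T^d}\operatorname{Tr}H_\alpha(k)dk=\sum_{x\in\mathcal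 V_*}v_x$, and if in addition there are no multiple edges in $\mathcal G_*$, then $$\operatorname{Tr}H_\alpha^2(k)=\frac1{(2\pi)^d}\int_{\mathbb T^d}\operatorname{Tr}H_\alpha^2(k)dk=\#\mathcal A_*+\sum_{x\in\mathcal V_*}v_x^2 .$$
   Context: Let $\Gamma\subset\mathbb R^d$ be a lattice with basis $\mathfrak a_1,\dots,\mathfrak a_d$ and fundamental cell $\Omega=\{\sum_sx_s\mathfrak a_s:(x_s)\in[0,1)^d\}$. Let $\mathcal G=(\mathcal V,\mathcal E)$ be a connected, locally finite, infinite graph embedded in $\mathbb R^d$ (loops and multiple edges allowed), invariant under translations by $\Gamma$, with finite quotient $\mathcal G_*=\mathcal G/\Gamma=(\mathcal V_*,\mathcal E_* )$; $\nu=\#\mathcal V_*$. Each unoriented edge gives two oriented edges; $\mathcal A,\mathcal A_*$ are the oriented edge sets (so $\#\mathcal A_*=\sum_x\varkappa_x$); $\underline{\mathbf e}$ is the inverse; $\varkappa_x$ is the number of oriented edges starting at $x$ (loops counted twice). Edge index: $x=x_0+[x]$ with $x_0\in\mathcal V\cap\Omega$, $[x]\in\Gamma$ with coordinates $[x]_{\mathbb A}\in\mathbb Z^d$; $\tau((x,y))=[y]_{\mathbb A}-[x]_{\mathbb A}$, defined on $\mathcal A_*$ by $\Gamma$-invariance. Periodic magnetic potential $\alpha:\mathcal A\to\mathbb R$ with $\alpha(\underline{\mathbf e})=-\alpha(\mathbf e)$, $\Gamma$-invariant; $V$ a real $\Gamma$-periodic function on $\mathcal V$ (viewed on $\mathcal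 V_*$). For $k\in\mathbb T^d=\mathbb R^d/(2\pi\mathbb Z)^d$: $H_\alpha(k)=A_\alpha(k)-\varkappa+V$ on $\mathbb C^\nu$, $(A_\alpha(k)f)_x=\sum_{\mathbf e=(x,y)\in\mathcal A_*}e^{i(\alpha(\mathbf e)+\langle\tau(\mathbf e),k\rangle)}f_y$, $(\varkappa f)_x=\varkappa_xf_x$, $(Vf)_x=V_xf_x$. Cycles in $\mathcal G_*$: ordered sequences of oriented edges $(\mathbf e_1,\dots,\mathbf e_n)$, $\mathbf e_s=(x_{s-1},x_s)$, $x_n=x_0$ (distinct cyclic shifts distinct, backtracking allowed); index $\tau(\mathbf c)=\sum\tau(\mathbf e)$; flux $\alpha(\mathbf c)=(\sum\alpha(\mathbf e))\bmod2\pi$. $\mathcal C_n$ = cycles of length $n$; $\mathcal C_n^0$ = those with zero index. In particular $\mathcal C_1$ consists of the oriented loops of $\mathcal G_*$. *)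

theory Defs
  imports "HOL-Analysis.Analysis"
begin

text \<open>Fundamental graph G_* : vertices = the finite type 'v, oriented edges = the
finite type 'e, with source/target maps src, tgt and the edge inversion einv.\<close>

definition graph_data ::
  "('e \<Rightarrow> 'v) \<Rightarrow> ('e \<Rightarrow> 'v) \<Rightarrow> ('e \<Rightarrow> 'e) \<Rightarrow> ('e \<Rightarrow> int^'d) \<Rightarrow> ('e \<Rightarrow> real) \<Rightarrow> bool" where
  "graph_data src tgt einv tau alpha \<longleftrightarrow>
     (\<forall>e. einv (einv e) = e \<and> einv e \<noteq> e \<and> src (einv e) = tgt e \<and> tgt (einv e) = src e
          \<and> tau (einv e) = - tau e \<and> alpha (einv e) = - alpha e)"

text \<open>kappa_x = number of oriented edges starting at x (loops counted twice, since
a loop and its inverse are two oriented edges starting at x).\<close>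
definition kappa :: "('e::finite \<Rightarrow> 'v) \<Rightarrow> 'v \<Rightarrow> nat" where
  "kappa src x = card {e. src e = x}"

definition pair_int :: "int^'d \<Rightarrow> real^'d \<Rightarrow> real" where
  "pair_int t k = (\<Sum>i\<in>UNIV. of_int (t $ i) * k $ i)"

definition Hmat ::
  "('e::finite \<Rightarrow> 'v::finite) \<Rightarrow> ('e \<Rightarrow> 'v) \<Rightarrow> ('e \<Rightarrow> int^'d) \<Rightarrow> ('e \<Rightarrow> real)
    \<Rightarrow> ('v \<Rightarrow> real) \<Rightarrow> real^'d \<Rightarrow> complex^'v^'v" where
  "Hmat src tgt tau alpha V k = (\<chi> x y.
      (\<Sum>e\<in>{e. src e = x \<and> tgt e = y}. cis (alpha e + pair_int (tau e) k))
      + (if x = y then complex_of_real (V x - real (kappa src x)) else 0))"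

definition cycles :: "('e::finite \<Rightarrow> 'v) \<Rightarrow> ('e \<Rightarrow> 'v) \<Rightarrow> nat \<Rightarrow> 'e list set" where
  "cycles src tgt n = {c. length c = n \<and> n \<ge> 1 \<and>
      (\<forall>s. Suc s < n \<longrightarrow> tgt (c ! s) = src (c ! Suc s)) \<and>
      tgt (c ! (n - 1)) = src (c ! 0)}"

definition cyc_index :: "('e \<Rightarrow> int^'d) \<Rightarrow> 'e list \<Rightarrow> int^'d" where
  "cyc_index tau c = sum_list (map tau c)"

text \<open>Flux (as a real representative; only cos of it is used, so reduction mod 2 pi
is immaterial).\<close>
definition flux :: "('e \<Rightarrow> real) \<Rightarrow> 'e list \<Rightarrow> real" where
  "flux alpha c = sum_list (map alpha c)"

definition cycles0 :: "('e::finite \<Rightarrow> 'v) \<Rightarrow> ('e \<Rightarrow> 'v) \<Rightarrow> ('e \<Rightarrow> int^'d) \<Rightarrow> nat \<Rightarrow> 'e list set" where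
  "cycles0 src tgt tau n = {c \<in> cycles src tgt n. cyc_index tau c = 0}"

definition phase :: "('e \<Rightarrow> int^'d) \<Rightarrow> ('e \<Rightarrow> real) \<Rightarrow> 'e list \<Rightarrow> real^'d \<Rightarrow> real" where
  "phase tau alpha c k = flux alpha c + pair_int (cyc_index tau c) k"

text \<open>The torus T^d, parametrised by the cube [0, 2 pi]^d.\<close>
definition torus_cube :: "(real^'d) set" where
  "torus_cube = cbox 0 (\<chi> i. 2 * pi)"

definition no_loops :: "('e \<Rightarrow> 'v) \<Rightarrow> ('e \<Rightarrow> 'v) \<Rightarrow> bool" where
  "no_loops src tgt \<longleftrightarrow> (\<forall>e. src e \<noteq> tgt e)"

definition no_multi_edges :: "('e \<Rightarrow> 'v) \<Rightarrow> ('e \<Rightarrow> 'v) \<Rightarrow> bool" where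
  "no_multi_edges src tgt \<longleftrightarrow> (\<forall>e e'. src e = src e' \<and> tgt e = tgt e' \<longrightarrow> e = e')"

end

theory Submission
  imports Defs
begin

lemma box_le:
  fixes c :: real
  assumes "0 \<le> c" "c \<le> 2*pi"
  shows "torus_cube \<inter> {x::real^'d. x \<bullet> axis j 1 \<le> c} = cbox 0 (\<chi> i. if i = j then c else 2*pi)"
    and "torus_cube \<inter> {x::real^'d. x \<bullet> axis j 1 \<ge> c} = cbox (\<chi> i. if i = j then c else 0) (\<chi> i. 2*pi)"
  using assms by (auto simp: torus_cube_def mem_box_cart inner_axis split: if_splits) (metis order_trans)+

lemma shift_periodic:
  fixes f :: "real^'d \<Rightarrow> complex"
  assumes cont: "continuous_on UNIV f"
    and per: "\<And>x. f (x + (2*pi) *\<^sub>R axis j 1) = f x"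
    and s: "0 \<le> s" "s \<le> 2*pi"
  shows "integral torus_cube (\<lambda>x. f (x + s *\<^sub>R axis j 1)) = integral torus_cube f"
proof -
  define e :: "real^'d" where "e = axis j 1"
  have eB: "e \<in> Basis" unfolding e_def by simp
  define c where "c = 2*pi - s"
  have c: "0 \<le> c" "c \<le> 2*pi" using s by (auto simp: c_def)
  have fint: "\<And>a b. f integrable_on cbox a b"
    by (rule integrable_continuous) (use cont continuous_on_subset in blast)
  define g where "g = (\<lambda>x. f (x + s *\<^sub>R e))"
  have g1: "g = f \<circ> ((+) (s *\<^sub>R e))" by (auto simp: g_def add.commute)
  have g2: "g = f \<circ> ((+) ((s - 2*pi) *\<^sub>R e))"
  proof
    fix x
    have "f (x + (s - 2*pi) *\<^sub>R e) = f (x + (s - 2*pi) *\<^sub>R e + (2*pi) *\<^sub>R e)"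
      using per unfolding e_def by simp
    also have "x + (s - 2*pi) *\<^sub>R e + (2*pi) *\<^sub>R e = x + s *\<^sub>R e"
      by (simp add: algebra_simps)
    finally show "g x = (f \<circ> (+) ((s - 2 * pi) *\<^sub>R e)) x" by (simp add: g_def add.commute)
  qed
  have T: "torus_cube = cbox (0::real^'d) (\<chi> i. 2*pi)" by (simp add: torus_cube_def)
  have gint: "g integrable_on torus_cube"
    unfolding g1 T using integrable_on_shift_cbox fint by blast
  have "integral torus_cube g = integral (torus_cube \<inter> {x. x \<bullet> e \<le> c}) g + integral (torus_cube \<inter> {x. x \<bullet> e \<ge> c}) g"
    using integral_split[OF gint[unfolded T] eB] T by simp
  also have "integral (torus_cube \<inter> {x. x \<bullet> e \<le> c}) g = integral (torus_cube \<inter> {x. x \<bullet> e \<ge> s}) f"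
  proof -
    have "((f \<circ> ((+) (s *\<^sub>R e))) has_integral integral (cbox (0 + s *\<^sub>R e) ((\<chi> i. if i = j then c else 2*pi) + s *\<^sub>R e)) f)
           (cbox 0 (\<chi> i. if i = j then c else 2*pi))"
      using has_integral_shift_cbox_iff fint by blast
    moreover have "cbox (0 + s *\<^sub>R e) ((\<chi> i. if i = j then c else 2*pi) + s *\<^sub>R e) = cbox (\<chi> i. if i = j then s else 0) (\<chi> i. 2*pi)"
      by (rule arg_cong2[where f=cbox]) (auto simp: vec_eq_iff e_def axis_def c_def)
    ultimately show ?thesis using box_le[OF c, of j] box_le[OF s, of j] g1
      by (simp add: e_def integral_unique)
  qed
  also have "integral (torus_cube \<inter> {x. x \<bullet> e \<ge> c}) g = integral (torus_cube \<inter> {x. x \<bullet> e \<le> s}) f"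
  proof -
    have "((f \<circ> ((+) ((s - 2*pi) *\<^sub>R e))) has_integral integral (cbox ((\<chi> i. if i = j then c else 0) + (s - 2*pi) *\<^sub>R e) ((\<chi> i. 2*pi) + (s - 2*pi) *\<^sub>R e)) f)
           (cbox (\<chi> i. if i = j then c else 0) (\<chi> i. 2*pi))"
      using has_integral_shift_cbox_iff fint by blast
    moreover have "cbox ((\<chi> i. if i = j then c else 0) + (s - 2*pi) *\<^sub>R e) ((\<chi> i. 2*pi) + (s - 2*pi) *\<^sub>R e) = cbox 0 (\<chi> i. if i = j then s else 2*pi)"
      by (rule arg_cong2[where f=cbox]) (auto simp: vec_eq_iff e_def axis_def c_def)
    ultimately show ?thesis using box_le[OF c, of j] box_le[OF s, of j] g2
      by (simp add: e_def integral_unique)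
  qed
  also have "integral (torus_cube \<inter> {x. x \<bullet> e \<ge> s}) f + integral (torus_cube \<inter> {x. x \<bullet> e \<le> s}) f = integral torus_cube f"
    using integral_split[OF fint eB, of 0 "\<chi> i. 2*pi" s] T by simp
  finally show ?thesis by (simp add: g_def e_def)
qed


lemma pair_int_shift:
  "pair_int t (x + r *\<^sub>R axis j 1) = pair_int t x + of_int (t $ j) * r"
  by (simp add: pair_int_def algebra_simps sum.distrib axis_def if_distrib[of "\<lambda>z. _ * z"] sum.delta cong: if_cong)

lemma pair_int_cont: "continuous_on UNIV (\<lambda>k. pair_int t k)"
  unfolding pair_int_def by (intro continuous_intros)

lemma cis_int_2pi: "cis (u + of_int m * (2*pi)) = cis u"
proof -
  have "cis (of_int m * (2*pi)) = 1" using cos_int_2pin[of m] sin_int_2pin[of m]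
    by (simp add: cis.ctr complex_eq_iff mult.commute)
  then show ?thesis by (metis cis_mult mult_1_right)
qed

lemma torus_content: "Henstock_Kurzweil_Integration.content (torus_cube :: (real^'d) set) = (2*pi) ^ CARD('d)"
proof -
  have "torus_cube \<noteq> ({}::(real^'d) set)"
  proof -
    have "0 \<in> (torus_cube :: (real^'d) set)" by (auto simp: torus_cube_def mem_box_cart)
    then show ?thesis by auto
  qed
  then show ?thesis unfolding torus_cube_def by (simp add: content_cbox_cart)
qed

lemma cis_integral:
  fixes t :: "int^'d"
  shows "((\<lambda>k::real^'d. cis (a + pair_int t k)) has_integral
           (if t = 0 then of_real ((2*pi) ^ CARD('d)) * cis a else 0)) torus_cube"
proof (cases "t = 0")
  case True
  have "((\<lambda>k::real^'d. cis a) has_integral (Henstock_Kurzweil_Integration.content (torus_cube::(real^'d) set) *\<^sub>R cis a)) torus_cube"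
    unfolding torus_cube_def by (rule has_integral_const)
  then show ?thesis using True by (simp add: pair_int_def torus_content scaleR_conv_of_real)
next
  case False
  then obtain j where tj: "t $ j \<noteq> 0" by (auto simp: vec_eq_iff)
  define f where "f = (\<lambda>k::real^'d. cis (a + pair_int t k))"
  have cont: "continuous_on UNIV f" unfolding f_def
    by (intro continuous_intros pair_int_cont continuous_on_cis)
  have per: "\<And>x. f (x + (2*pi) *\<^sub>R axis j 1) = f x"
    unfolding f_def pair_int_shift by (metis add.assoc cis_int_2pi mult.commute)
  define s where "s = pi / \<bar>of_int (t $ j)\<bar>"
  have ab: "\<bar>real_of_int (t $ j)\<bar> \<ge> 1" using tj by linarith
  have s: "0 \<le> s" "s \<le> 2*pi" unfolding s_def using ab pi_gt_zero
    by (auto simp: divide_simps)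
  have neg: "\<And>x. f (x + s *\<^sub>R axis j 1) = - f x"
  proof -
    fix x
    have "of_int (t $ j) * s = pi \<or> of_int (t $ j) * s = - pi"
      using tj unfolding s_def by (cases "t $ j > 0") (auto simp: abs_if)
    then have "cis (of_int (t $ j) * s) = -1" by (auto simp: cis.ctr complex_eq_iff)
    then show "f (x + s *\<^sub>R axis j 1) = - f x"
      unfolding f_def pair_int_shift by (metis add.assoc cis_mult mult_minus1_right)
  qed
  have fint: "f integrable_on torus_cube"
    unfolding torus_cube_def by (rule integrable_continuous) (use cont continuous_on_subset in blast)
  have "integral torus_cube f = - integral torus_cube f"
    using shift_periodic[OF cont per s] neg integral_neg[of torus_cube f] by simp
  then have "integral torus_cube f = 0" by simp
  then show ?thesis using False integrable_integral[OF fint] by (simp add: f_def)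
qed


definition Aent :: "('e::finite \<Rightarrow> 'v) \<Rightarrow> ('e \<Rightarrow> 'v) \<Rightarrow> ('e \<Rightarrow> int^'d) \<Rightarrow> ('e \<Rightarrow> real) \<Rightarrow> real^'d \<Rightarrow> 'v \<Rightarrow> 'v \<Rightarrow> complex" where
  "Aent src tgt tau alpha k x y = (\<Sum>e\<in>{e. src e = x \<and> tgt e = y}. cis (alpha e + pair_int (tau e) k))"

lemma Hmat_ent: "Hmat src tgt tau alpha V k $ x $ y =
   Aent src tgt tau alpha k x y + (if x = y then complex_of_real (V x - real (kappa src x)) else 0)"
  by (simp add: Hmat_def Aent_def)

lemma pair_int_add: "pair_int (s + t) k = pair_int s k + pair_int t k"
  by (simp add: pair_int_def algebra_simps sum.distrib)

lemma pair_int_zero[simp]: "pair_int 0 k = 0"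
  by (simp add: pair_int_def)

lemma pair_int_neg: "pair_int (- t) k = - pair_int t k"
  by (simp add: pair_int_def sum_negf)

lemma phase1[simp]: "phase tau alpha [e] k = alpha e + pair_int (tau e) k"
  by (simp add: phase_def flux_def cyc_index_def)

lemma phase2[simp]: "phase tau alpha [a, b] k = (alpha a + pair_int (tau a) k) + (alpha b + pair_int (tau b) k)"
  by (simp add: phase_def flux_def cyc_index_def pair_int_add)

lemma cyc1: "cycles src tgt 1 = (\<lambda>e. [e]) ` {e. src e = tgt e}"
proof (rule set_eqI)
  fix c
  show "c \<in> cycles src tgt 1 \<longleftrightarrow> c \<in> (\<lambda>e. [e]) ` {e. src e = tgt e}"
  proof
    assume "c \<in> cycles src tgt 1"
    then have "length c = 1" "tgt (c ! 0) = src (c ! 0)" by (auto simp: cycles_def)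
    then obtain e where "c = [e]" by (auto simp: length_Suc_conv)
    then show "c \<in> (\<lambda>e. [e]) ` {e. src e = tgt e}" using \<open>tgt (c ! 0) = src (c ! 0)\<close> by auto
  qed (auto simp: cycles_def)
qed

lemma cyc2: "cycles src tgt 2 = (\<lambda>(a, b). [a, b]) ` {(a, b). tgt a = src b \<and> tgt b = src a}"
proof (rule set_eqI)
  fix c
  show "c \<in> cycles src tgt 2 \<longleftrightarrow> c \<in> (\<lambda>(a, b). [a, b]) ` {(a, b). tgt a = src b \<and> tgt b = src a}"
  proof
    assume h: "c \<in> cycles src tgt 2"
    then have "length c = 2" by (auto simp: cycles_def)
    then obtain a b where c: "c = [a, b]" by (auto simp: length_Suc_conv numeral_2_eq_2)
    have "tgt a = src b" "tgt b = src a" using h unfolding c cycles_def by auto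
    then show "c \<in> (\<lambda>(a, b). [a, b]) ` {(a, b). tgt a = src b \<and> tgt b = src a}" using c by auto
  next
    assume "c \<in> (\<lambda>(a, b). [a, b]) ` {(a, b). tgt a = src b \<and> tgt b = src a}"
    then show "c \<in> cycles src tgt 2" by (auto simp: cycles_def less_2_cases_iff)
  qed
qed

lemma group_loops:
  fixes src tgt :: "'e::finite \<Rightarrow> 'v::finite"
  shows "(\<Sum>x\<in>UNIV. \<Sum>e\<in>{e. src e = x \<and> tgt e = x}. F e) = (\<Sum>e\<in>{e. src e = tgt e}. (F e :: 'a::comm_monoid_add))"
proof -
  have "(\<Sum>y\<in>UNIV. sum F {e \<in> {e. src e = tgt e}. src e = y}) = sum F {e. src e = tgt e}"
    by (rule sum.group) auto
  moreover have "\<And>y. {e \<in> {e. src e = tgt e}. src e = y} = {e. src e = y \<and> tgt e = y}" by auto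
  ultimately show ?thesis by simp
qed

lemma trace1:
  fixes src tgt :: "'e::finite \<Rightarrow> 'v::finite"
  shows "trace (Hmat src tgt tau alpha V k) =
    complex_of_real (\<Sum>x\<in>UNIV. V x - real (kappa src x)) + (\<Sum>c\<in>cycles src tgt 1. cis (phase tau alpha c k))"
proof -
  have "trace (Hmat src tgt tau alpha V k) = (\<Sum>x\<in>UNIV. Aent src tgt tau alpha k x x) + complex_of_real (\<Sum>x\<in>UNIV. V x - real (kappa src x))"
    by (simp add: trace_def Hmat_ent sum.distrib)
  also have "(\<Sum>x\<in>UNIV. Aent src tgt tau alpha k x x) = (\<Sum>e\<in>{e. src e = tgt e}. cis (alpha e + pair_int (tau e) k))"
    unfolding Aent_def by (rule group_loops)
  also have "\<dots> = (\<Sum>c\<in>cycles src tgt 1. cis (phase tau alpha c k))"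
    unfolding cyc1 by (subst sum.reindex) (auto simp: inj_on_def)
  finally show ?thesis by simp
qed

lemma trace2:
  fixes src tgt :: "'e::finite \<Rightarrow> 'v::finite" and V :: "'v \<Rightarrow> real"
  defines "v \<equiv> (\<lambda>x. V x - real (kappa src x))"
  shows "trace (Hmat src tgt tau alpha V k ** Hmat src tgt tau alpha V k) =
    complex_of_real (\<Sum>x\<in>UNIV. (v x)\<^sup>2)
    + 2 * (\<Sum>c\<in>cycles src tgt 1. complex_of_real (v (src (hd c))) * cis (phase tau alpha c k))
    + (\<Sum>c\<in>cycles src tgt 2. cis (phase tau alpha c k))"
proof -
  let ?A = "Aent src tgt tau alpha k"
  let ?H = "Hmat src tgt tau alpha V k"
  let ?ph = "\<lambda>e. alpha e + pair_int (tau e) k"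
  have diag: "(?H ** ?H) $ x $ x = (\<Sum>y\<in>UNIV. ?A x y * ?A y x) + 2 * complex_of_real (v x) * ?A x x + complex_of_real ((v x)\<^sup>2)" for x
  proof -
    have He: "\<And>x y. ?H $ x $ y = ?A x y + (if x = y then complex_of_real (v x) else 0)"
      by (simp add: Hmat_ent v_def)
    have "\<And>y. ?H $ x $ y * ?H $ y $ x = ?A x y * ?A y x + (if x = y then 2 * complex_of_real (v x) * ?A x x + complex_of_real ((v x)\<^sup>2) else 0)"
      unfolding He by (simp add: power2_eq_square algebra_simps)
    then show ?thesis by (simp add: matrix_matrix_mult_def sum.distrib)
  qed
  have T: "trace (?H ** ?H) = (\<Sum>x\<in>UNIV. \<Sum>y\<in>UNIV. ?A x y * ?A y x) + 2 * (\<Sum>x\<in>UNIV. complex_of_real (v x) * ?A x x) + complex_of_real (\<Sum>x\<in>UNIV. (v x)\<^sup>2)"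
    by (simp add: trace_def diag sum.distrib sum_distrib_left mult.assoc)
  have L: "(\<Sum>x\<in>UNIV. complex_of_real (v x) * ?A x x) = (\<Sum>c\<in>cycles src tgt 1. complex_of_real (v (src (hd c))) * cis (phase tau alpha c k))"
  proof -
    have "(\<Sum>x\<in>UNIV. complex_of_real (v x) * ?A x x) = (\<Sum>x\<in>UNIV. \<Sum>e\<in>{e. src e = x \<and> tgt e = x}. complex_of_real (v (src e)) * cis (?ph e))"
      unfolding Aent_def sum_distrib_left by (intro sum.cong) auto
    also have "\<dots> = (\<Sum>e\<in>{e. src e = tgt e}. complex_of_real (v (src e)) * cis (?ph e))"
      by (rule group_loops)
    also have "\<dots> = (\<Sum>c\<in>cycles src tgt 1. complex_of_real (v (src (hd c))) * cis (phase tau alpha c k))"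
      unfolding cyc1 by (subst sum.reindex) (auto simp: inj_on_def)
    finally show ?thesis .
  qed
  define P where "P = {(a, b). tgt a = src b \<and> tgt b = src a}"
  have Q: "(\<Sum>x\<in>UNIV. \<Sum>y\<in>UNIV. ?A x y * ?A y x) = (\<Sum>c\<in>cycles src tgt 2. cis (phase tau alpha c k))"
  proof -
    let ?E = "\<lambda>x y. {e. src e = x \<and> tgt e = y}"
    let ?h = "\<lambda>p. cis (?ph (fst p)) * cis (?ph (snd p))"
    have "\<And>x y. ?A x y * ?A y x = (\<Sum>p\<in>?E x y \<times> ?E y x. ?h p)"
      unfolding Aent_def sum_product sum.cartesian_product by (simp only: split_def)
    then have "(\<Sum>x\<in>UNIV. \<Sum>y\<in>UNIV. ?A x y * ?A y x) = (\<Sum>q\<in>UNIV. \<Sum>p\<in>?E (fst q) (snd q) \<times> ?E (snd q) (fst q). ?h p)"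
    proof -
      have "(\<Sum>x\<in>UNIV. \<Sum>y\<in>UNIV. ?A x y * ?A y x) = (\<Sum>q\<in>UNIV \<times> UNIV. ?A (fst q) (snd q) * ?A (snd q) (fst q))"
        unfolding sum.cartesian_product by (simp only: split_def)
      then show ?thesis using \<open>\<And>x y. ?A x y * ?A y x = _\<close> by simp
    qed
    also have "\<dots> = (\<Sum>q\<in>UNIV. \<Sum>p\<in>{p \<in> P. (src (fst p), tgt (fst p)) = q}. ?h p)"
      by (intro sum.cong refl arg_cong2[where f=sum]) (auto simp: P_def)
    also have "\<dots> = (\<Sum>p\<in>P. ?h p)"
      by (rule sum.group) auto
    also have "\<dots> = (\<Sum>c\<in>cycles src tgt 2. cis (phase tau alpha c k))"
    proof -
      have inj: "inj_on (\<lambda>(a, b). [a, b]) P" by (auto simp: inj_on_def)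
      have "(\<Sum>c\<in>cycles src tgt 2. cis (phase tau alpha c k)) = (\<Sum>p\<in>P. cis (phase tau alpha ((\<lambda>(a, b). [a, b]) p) k))"
        unfolding cyc2 P_def[symmetric] using sum.reindex[OF inj] by (simp add: comp_def)
      also have "\<dots> = (\<Sum>p\<in>P. ?h p)"
        by (intro sum.cong refl) (simp add: split_def cis_mult)
      finally show ?thesis by simp
    qed
    finally show ?thesis .
  qed
  show ?thesis using T L Q by (simp add: v_def)
qed


lemma inv_sum:
  assumes "finite S" "\<And>c. c \<in> S \<Longrightarrow> g c \<in> S \<and> g (g c) = c \<and> w (g c) = w c \<and> \<phi> (g c) = - \<phi> c"
  shows "(\<Sum>c\<in>S. complex_of_real (w c) * cis (\<phi> c)) = complex_of_real (\<Sum>c\<in>S. w c * cos (\<phi> c))"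
proof -
  have "(\<Sum>c\<in>S. w c * sin (\<phi> c)) = (\<Sum>c\<in>S. w (g c) * sin (\<phi> (g c)))"
    by (rule sum.reindex_bij_witness[where i=g and j=g]) (use assms in auto)
  also have "\<dots> = (\<Sum>c\<in>S. - (w c * sin (\<phi> c)))"
    by (intro sum.cong refl) (use assms in auto)
  also have "\<dots> = - (\<Sum>c\<in>S. w c * sin (\<phi> c))" by (simp add: sum_negf)
  finally have z: "(\<Sum>c\<in>S. w c * sin (\<phi> c)) = 0" by simp
  show ?thesis
    by (simp add: complex_eq_iff Re_sum Im_sum z)
qed

definition rv :: "('e \<Rightarrow> 'e) \<Rightarrow> 'e list \<Rightarrow> 'e list" where
  "rv einv c = rev (map einv c)"

lemma rv_props:
  assumes G: "graph_data src tgt einv tau alpha"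
  shows "rv einv (rv einv c) = c"
    and "flux alpha (rv einv c) = - flux alpha c"
    and "cyc_index tau (rv einv c) = - cyc_index tau c"
    and "phase tau alpha (rv einv c) k = - phase tau alpha c k"
proof -
  have g: "\<And>e. einv (einv e) = e" "\<And>e. alpha (einv e) = - alpha e" "\<And>e. tau (einv e) = - tau e"
    using G by (auto simp: graph_data_def)
  show "rv einv (rv einv c) = c" by (simp add: rv_def rev_map comp_def g)
  show f: "flux alpha (rv einv c) = - flux alpha c"
    by (induction c) (auto simp: rv_def flux_def g)
  show i: "cyc_index tau (rv einv c) = - cyc_index tau c"
    by (induction c) (auto simp: rv_def cyc_index_def g)
  show "phase tau alpha (rv einv c) k = - phase tau alpha c k"
    by (simp add: phase_def f i pair_int_neg)
qed

lemma rv_cyc1: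
  assumes G: "graph_data src tgt einv tau alpha" and c: "c \<in> cycles src tgt 1"
  shows "rv einv c \<in> cycles src tgt 1 \<and> src (hd (rv einv c)) = src (hd c)"
  using c G unfolding cyc1 by (auto simp: rv_def graph_data_def)

lemma rv_cyc2:
  assumes G: "graph_data src tgt einv tau alpha" and c: "c \<in> cycles src tgt 2"
  shows "rv einv c \<in> cycles src tgt 2"
proof -
  obtain a b where "c = [a, b]" "tgt a = src b" "tgt b = src a" using c unfolding cyc2 by auto
  then show ?thesis using G unfolding cyc2 by (auto simp: rv_def graph_data_def image_iff)
qed

lemma finite_cycles: "finite (cycles (src :: 'e::finite \<Rightarrow> 'v) tgt n)"
  by (rule finite_subset[OF _ finite_lists_length_eq[of UNIV n]]) (auto simp: cycles_def)

lemma finite_cycles0: "finite (cycles0 (src :: 'e::finite \<Rightarrow> 'v) tgt tau n)"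
  by (rule finite_subset[OF _ finite_cycles[of src tgt n]]) (auto simp: cycles0_def)

lemma int_sum:
  fixes tau :: "'e \<Rightarrow> int^'d"
  assumes "finite S"
  shows "((\<lambda>k::real^'d. \<Sum>c\<in>S. complex_of_real (w c) * cis (phase tau alpha c k)) has_integral
    (complex_of_real ((2*pi) ^ CARD('d)) * (\<Sum>c\<in>{c\<in>S. cyc_index tau c = 0}. complex_of_real (w c) * cis (flux alpha c)))) torus_cube"
proof -
  have "((\<lambda>k::real^'d. \<Sum>c\<in>S. complex_of_real (w c) * cis (phase tau alpha c k)) has_integral
    (\<Sum>c\<in>S. complex_of_real (w c) * (if cyc_index tau c = 0 then complex_of_real ((2*pi) ^ CARD('d)) * cis (flux alpha c) else 0))) torus_cube"
    using assms by (intro has_integral_sum has_integral_mult_right) (auto simp: phase_def cis_integral)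
  moreover have "(\<Sum>c\<in>S. complex_of_real (w c) * (if cyc_index tau c = 0 then complex_of_real ((2*pi) ^ CARD('d)) * cis (flux alpha c) else 0))
     = complex_of_real ((2*pi) ^ CARD('d)) * (\<Sum>c\<in>{c\<in>S. cyc_index tau c = 0}. complex_of_real (w c) * cis (flux alpha c))"
    using assms by (simp add: sum.inter_filter sum_distrib_left if_distrib mult.left_commute cong: if_cong)
  ultimately show ?thesis by simp
qed


theorem proposition3p5:
  fixes src tgt :: "'e::finite \<Rightarrow> 'v::finite" and einv :: "'e \<Rightarrow> 'e"
    and tau :: "'e \<Rightarrow> int^'d" and alpha :: "'e \<Rightarrow> real" and V :: "'v \<Rightarrow> real"
  assumes G: "graph_data src tgt einv tau alpha"
  defines "v \<equiv> (\<lambda>x. V x - real (kappa src x))"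
      and "H \<equiv> Hmat src tgt tau alpha V"
  shows
   "(\<forall>k. trace (H k) =
        complex_of_real ((\<Sum>x\<in>UNIV. v x) + (\<Sum>c\<in>cycles src tgt 1. cos (phase tau alpha c k))))
    \<and> (\<forall>k. trace (H k ** H k) =
        complex_of_real ((\<Sum>x\<in>UNIV. (v x)\<^sup>2)
          + 2 * (\<Sum>c\<in>cycles src tgt 1. v (src (hd c)) * cos (phase tau alpha c k))
          + (\<Sum>c\<in>cycles src tgt 2. cos (phase tau alpha c k))))
    \<and> (1 / (2 * pi) ^ CARD('d)) * integral torus_cube (\<lambda>k. trace (H k)) =
        complex_of_real ((\<Sum>x\<in>UNIV. v x) + (\<Sum>c\<in>cycles0 src tgt tau 1. cos (flux alpha c)))
    \<and> (1 / (2 * pi) ^ CARD('d)) * integral torus_cube (\<lambda>k. trace (H k ** H k)) =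
        complex_of_real ((\<Sum>x\<in>UNIV. (v x)\<^sup>2)
          + 2 * (\<Sum>c\<in>cycles0 src tgt tau 1. v (src (hd c)) * cos (flux alpha c))
          + (\<Sum>c\<in>cycles0 src tgt tau 2. cos (flux alpha c)))
    \<and> (no_loops src tgt \<longrightarrow>
        (\<forall>k. trace (H k) = complex_of_real (\<Sum>x\<in>UNIV. v x))
        \<and> (1 / (2 * pi) ^ CARD('d)) * integral torus_cube (\<lambda>k. trace (H k))
            = complex_of_real (\<Sum>x\<in>UNIV. v x))
    \<and> (no_loops src tgt \<and> no_multi_edges src tgt \<longrightarrow>
        (\<forall>k. trace (H k ** H k) = complex_of_real (real CARD('e) + (\<Sum>x\<in>UNIV. (v x)\<^sup>2)))
        \<and> (1 / (2 * pi) ^ CARD('d)) * integral torus_cube (\<lambda>k. trace (H k ** H k))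
            = complex_of_real (real CARD('e) + (\<Sum>x\<in>UNIV. (v x)\<^sup>2)))"
proof -
  define S1 where "S1 = cycles src tgt 1"
  define S2 where "S2 = cycles src tgt 2"
  define Z1 where "Z1 = cycles0 src tgt tau 1"
  define Z2 where "Z2 = cycles0 src tgt tau 2"
  define K where "K = ((2*pi) ^ CARD('d) :: real)"
  have K0: "K \<noteq> 0" by (simp add: K_def)
  have fin: "finite S1" "finite S2" "finite Z1" "finite Z2"
    by (simp_all add: S1_def S2_def Z1_def Z2_def finite_cycles finite_cycles0)
  have Zf1: "{c\<in>S1. cyc_index tau c = 0} = Z1" by (simp add: S1_def Z1_def cycles0_def)
  have Zf2: "{c\<in>S2. cyc_index tau c = 0} = Z2" by (simp add: S2_def Z2_def cycles0_def)
  have T1: "\<And>k. trace (H k) = complex_of_real (\<Sum>x\<in>UNIV. v x) + (\<Sum>c\<in>S1. complex_of_real 1 * cis (phase tau alpha c k))"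
    using trace1 unfolding H_def v_def S1_def by simp
  have T2: "\<And>k. trace (H k ** H k) = complex_of_real (\<Sum>x\<in>UNIV. (v x)\<^sup>2)
    + 2 * (\<Sum>c\<in>S1. complex_of_real (v (src (hd c))) * cis (phase tau alpha c k))
    + (\<Sum>c\<in>S2. complex_of_real 1 * cis (phase tau alpha c k))"
    using trace2 unfolding H_def v_def S1_def S2_def by simp
  note rvp = rv_props[OF G]
  have inv1: "\<And>c. c \<in> S1 \<Longrightarrow> rv einv c \<in> S1 \<and> src (hd (rv einv c)) = src (hd c)"
    using rv_cyc1[OF G] unfolding S1_def by blast
  have inv2: "\<And>c. c \<in> S2 \<Longrightarrow> rv einv c \<in> S2"
    using rv_cyc2[OF G] unfolding S2_def by blast
  have invz1: "\<And>c. c \<in> Z1 \<Longrightarrow> rv einv c \<in> Z1 \<and> src (hd (rv einv c)) = src (hd c)"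
    using inv1 rvp(3) unfolding Z1_def S1_def cycles0_def by auto
  have invz2: "\<And>c. c \<in> Z2 \<Longrightarrow> rv einv c \<in> Z2"
    using inv2 rvp(3) unfolding Z2_def S2_def cycles0_def by auto
  have R1: "\<And>k. (\<Sum>c\<in>S1. complex_of_real 1 * cis (phase tau alpha c k)) = complex_of_real (\<Sum>c\<in>S1. 1 * cos (phase tau alpha c k))"
    by (rule inv_sum[where g="rv einv"]) (use fin inv1 rvp in auto)
  have R1v: "\<And>k. (\<Sum>c\<in>S1. complex_of_real (v (src (hd c))) * cis (phase tau alpha c k)) = complex_of_real (\<Sum>c\<in>S1. v (src (hd c)) * cos (phase tau alpha c k))"
    by (rule inv_sum[where g="rv einv"]) (use fin inv1 rvp in auto)
  have R2: "\<And>k. (\<Sum>c\<in>S2. complex_of_real 1 * cis (phase tau alpha c k)) = complex_of_real (\<Sum>c\<in>S2. 1 * cos (phase tau alpha c k))"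
    by (rule inv_sum[where g="rv einv"]) (use fin inv2 rvp in auto)
  have F1: "(\<Sum>c\<in>Z1. complex_of_real 1 * cis (flux alpha c)) = complex_of_real (\<Sum>c\<in>Z1. 1 * cos (flux alpha c))"
    by (rule inv_sum[where g="rv einv"]) (use fin invz1 rvp in auto)
  have F1v: "(\<Sum>c\<in>Z1. complex_of_real (v (src (hd c))) * cis (flux alpha c)) = complex_of_real (\<Sum>c\<in>Z1. v (src (hd c)) * cos (flux alpha c))"
    by (rule inv_sum[where g="rv einv"]) (use fin invz1 rvp in auto)
  have F2: "(\<Sum>c\<in>Z2. complex_of_real 1 * cis (flux alpha c)) = complex_of_real (\<Sum>c\<in>Z2. 1 * cos (flux alpha c))"
    by (rule inv_sum[where g="rv einv"]) (use fin invz2 rvp in auto)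
  have const: "\<And>z. ((\<lambda>k::real^'d. z) has_integral (complex_of_real K * z)) torus_cube"
  proof -
    fix z :: complex
    have "((\<lambda>k::real^'d. z) has_integral (Henstock_Kurzweil_Integration.content (torus_cube::(real^'d) set) *\<^sub>R z)) torus_cube"
      unfolding torus_cube_def by (rule has_integral_const)
    then show "((\<lambda>k::real^'d. z) has_integral (complex_of_real K * z)) torus_cube"
      by (simp add: torus_content K_def scaleR_conv_of_real)
  qed
  have I1: "((\<lambda>k. trace (H k)) has_integral
      (complex_of_real K * (complex_of_real (\<Sum>x\<in>UNIV. v x) + (\<Sum>c\<in>Z1. complex_of_real 1 * cis (flux alpha c))))) torus_cube"
  proof -
    have "((\<lambda>k. complex_of_real (\<Sum>x\<in>UNIV. v x) + (\<Sum>c\<in>S1. complex_of_real 1 * cis (phase tau alpha c k))) has_integral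
      (complex_of_real K * complex_of_real (\<Sum>x\<in>UNIV. v x) + complex_of_real K * (\<Sum>c\<in>Z1. complex_of_real 1 * cis (flux alpha c)))) torus_cube"
      by (intro has_integral_add const) (use int_sum[OF fin(1), of "\<lambda>_. 1" tau alpha] Zf1 K_def in simp)
    then show ?thesis unfolding T1 by (simp add: distrib_left)
  qed
  have I2: "((\<lambda>k. trace (H k ** H k)) has_integral
      (complex_of_real K * (complex_of_real (\<Sum>x\<in>UNIV. (v x)\<^sup>2)
        + 2 * (\<Sum>c\<in>Z1. complex_of_real (v (src (hd c))) * cis (flux alpha c))
        + (\<Sum>c\<in>Z2. complex_of_real 1 * cis (flux alpha c))))) torus_cube"
  proof -
    have "((\<lambda>k. complex_of_real (\<Sum>x\<in>UNIV. (v x)\<^sup>2)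
          + 2 * (\<Sum>c\<in>S1. complex_of_real (v (src (hd c))) * cis (phase tau alpha c k))
          + (\<Sum>c\<in>S2. complex_of_real 1 * cis (phase tau alpha c k))) has_integral
      (complex_of_real K * complex_of_real (\<Sum>x\<in>UNIV. (v x)\<^sup>2)
        + 2 * (complex_of_real K * (\<Sum>c\<in>Z1. complex_of_real (v (src (hd c))) * cis (flux alpha c)))
        + complex_of_real K * (\<Sum>c\<in>Z2. complex_of_real 1 * cis (flux alpha c)))) torus_cube"
      by (intro has_integral_add const has_integral_mult_right)
        (use int_sum[OF fin(1), of "\<lambda>c. v (src (hd c))" tau alpha] int_sum[OF fin(2), of "\<lambda>_. 1" tau alpha] Zf1 Zf2 K_def in simp_all)
    then show ?thesis unfolding T2 by (simp add: distrib_left mult.left_commute)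
  qed
  have div: "\<And>z. (1 / (2 * pi) ^ CARD('d)) * (complex_of_real K * z) = z"
    using K0 by (simp add: K_def)
  have P1: "\<forall>k. trace (H k) =
        complex_of_real ((\<Sum>x\<in>UNIV. v x) + (\<Sum>c\<in>cycles src tgt 1. cos (phase tau alpha c k)))"
    using T1 R1 by (simp add: S1_def)
  have P2: "\<forall>k. trace (H k ** H k) =
        complex_of_real ((\<Sum>x\<in>UNIV. (v x)\<^sup>2)
          + 2 * (\<Sum>c\<in>cycles src tgt 1. v (src (hd c)) * cos (phase tau alpha c k))
          + (\<Sum>c\<in>cycles src tgt 2. cos (phase tau alpha c k)))"
    using T2 R1v R2 by (simp add: S1_def S2_def)
  have P3: "(1 / (2 * pi) ^ CARD('d)) * integral torus_cube (\<lambda>k. trace (H k)) =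
        complex_of_real ((\<Sum>x\<in>UNIV. v x) + (\<Sum>c\<in>cycles0 src tgt tau 1. cos (flux alpha c)))"
    using integral_unique[OF I1] div F1 by (simp add: Z1_def)
  have P4: "(1 / (2 * pi) ^ CARD('d)) * integral torus_cube (\<lambda>k. trace (H k ** H k)) =
        complex_of_real ((\<Sum>x\<in>UNIV. (v x)\<^sup>2)
          + 2 * (\<Sum>c\<in>cycles0 src tgt tau 1. v (src (hd c)) * cos (flux alpha c))
          + (\<Sum>c\<in>cycles0 src tgt tau 2. cos (flux alpha c)))"
    using integral_unique[OF I2] div F1v F2 by (simp add: Z1_def Z2_def)
  have NL1: "no_loops src tgt \<Longrightarrow> cycles src tgt 1 = {}"
    unfolding cyc1 no_loops_def by auto
  have NL0: "no_loops src tgt \<Longrightarrow> cycles0 src tgt tau 1 = {}"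
    using NL1 by (simp add: cycles0_def)
  have C2: "cycles src tgt 2 = (\<lambda>a. [a, einv a]) ` UNIV" "cycles0 src tgt tau 2 = (\<lambda>a. [a, einv a]) ` UNIV"
    if nl: "no_multi_edges src tgt"
  proof -
    have "{(a, b). tgt a = src b \<and> tgt b = src a} = (\<lambda>a. (a, einv a)) ` UNIV"
      using G nl unfolding graph_data_def no_multi_edges_def by (auto simp: image_iff)
    then show c2: "cycles src tgt 2 = (\<lambda>a. [a, einv a]) ` UNIV" unfolding cyc2 by auto
    have "\<And>a. cyc_index tau [a, einv a] = 0" using G by (simp add: graph_data_def cyc_index_def)
    then show "cycles0 src tgt tau 2 = (\<lambda>a. [a, einv a]) ` UNIV" unfolding cycles0_def c2 by auto
  qed
  have ph0: "\<And>a k. phase tau alpha [a, einv a] k = 0" "\<And>a. flux alpha [a, einv a] = 0"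
    using G by (simp_all add: graph_data_def phase_def flux_def cyc_index_def)
  have injA: "inj (\<lambda>a. [a, einv a])" by (auto simp: inj_on_def)
  have SC1: "\<And>k. no_multi_edges src tgt \<Longrightarrow> (\<Sum>c\<in>cycles src tgt 2. cos (phase tau alpha c k)) = real CARD('e)"
    using injA C2 by (auto simp: sum.reindex ph0 comp_def simp del: phase2)
  have SC2: "no_multi_edges src tgt \<Longrightarrow> (\<Sum>c\<in>cycles0 src tgt tau 2. cos (flux alpha c)) = real CARD('e)"
    using injA C2 by (auto simp: sum.reindex ph0 comp_def simp del: phase2)
  have A5: "no_loops src tgt \<longrightarrow>
        (\<forall>k. trace (H k) = complex_of_real (\<Sum>x\<in>UNIV. v x))
        \<and> (1 / (2 * pi) ^ CARD('d)) * integral torus_cube (\<lambda>k. trace (H k))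
            = complex_of_real (\<Sum>x\<in>UNIV. v x)"
  proof
    assume a: "no_loops src tgt"
    show "(\<forall>k. trace (H k) = complex_of_real (\<Sum>x\<in>UNIV. v x))
        \<and> (1 / (2 * pi) ^ CARD('d)) * integral torus_cube (\<lambda>k. trace (H k))
            = complex_of_real (\<Sum>x\<in>UNIV. v x)"
      using P1 P3 unfolding NL1[OF a] NL0[OF a] sum.empty by simp
  qed
  have A6: "no_loops src tgt \<and> no_multi_edges src tgt \<longrightarrow>
        (\<forall>k. trace (H k ** H k) = complex_of_real (real CARD('e) + (\<Sum>x\<in>UNIV. (v x)\<^sup>2)))
        \<and> (1 / (2 * pi) ^ CARD('d)) * integral torus_cube (\<lambda>k. trace (H k ** H k))
            = complex_of_real (real CARD('e) + (\<Sum>x\<in>UNIV. (v x)\<^sup>2))"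
  proof
    assume a: "no_loops src tgt \<and> no_multi_edges src tgt"
    have "\<forall>k. trace (H k ** H k) = complex_of_real (real CARD('e) + (\<Sum>x\<in>UNIV. (v x)\<^sup>2))"
    proof
      fix k
      show "trace (H k ** H k) = complex_of_real (real CARD('e) + (\<Sum>x\<in>UNIV. (v x)\<^sup>2))"
        using P2[rule_format, of k, unfolded NL1[OF conjunct1[OF a]] SC1[OF conjunct2[OF a]] sum.empty]
        by (simp only: mult_zero_right add_0_right add_0_left add.commute)
    qed
    moreover have "(1 / (2 * pi) ^ CARD('d)) * integral torus_cube (\<lambda>k. trace (H k ** H k))
            = complex_of_real (real CARD('e) + (\<Sum>x\<in>UNIV. (v x)\<^sup>2))"
      using P4[unfolded NL0[OF conjunct1[OF a]] SC2[OF conjunct2[OF a]] sum.empty]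
      by (simp only: mult_zero_right add_0_right add_0_left add.commute)
    ultimately show "(\<forall>k. trace (H k ** H k) = complex_of_real (real CARD('e) + (\<Sum>x\<in>UNIV. (v x)\<^sup>2)))
        \<and> (1 / (2 * pi) ^ CARD('d)) * integral torus_cube (\<lambda>k. trace (H k ** H k))
            = complex_of_real (real CARD('e) + (\<Sum>x\<in>UNIV. (v x)\<^sup>2))" by blast
  qed
  show ?thesis using P1 P2 P3 P4 A5 A6 by blast
qed

end
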